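(* Let $n\ge 2$, $p>n+1$, and let $h_1,h_2$ be $C^2$ functions on $\{x'\in\mathbb{R}^{n-1}:|x'|<1\}$ satisfying $h_1(0')=h_2(0')=0$, $D_{x'}h_1(0')=D_{x'}h_2(0')=0$, and, for some constants $\kappa_1,\kappa_2>0$, $$\kappa_1 I_{n-1}\le D^2h_1(x')\le\kappa_2 I_{n-1},\qquad \kappa_1 I_{n-1}\le -D^2h_2(x')\le\kappa_2 I_{n-1}\quad\text{for } 0\le|x'|<1.$$ Let $\delta\in(0,p-n-1)$ and $\gamma\in\big(0,\frac{p-n-1-\delta}{p-1}\big)$, and set $v(x)=(|x'|^2+(2+\delta)x_n^2)^{\gamma/2}$. Then there exists $\mu\in(0,1/2)$ depending only on $n,p,\delta,\gamma,\kappa_1,\kappa_2$ and the modulus of continuity of $D^2h_1$ and $D^2h_2$ at $x'=0$, such that for every $\varepsilon\in(0,\mu^2/\kappa_2)$, $$-\operatorname{div}(|Dv|^{p-2}Dv)>0\ \text{ in }\Omega_{\mu/\kappa_2}\setminus\Omega_{\varepsilon/\mu},\qquad \frac{\partial v}{\partial\nu}>0\ \text{ on }(\Gamma_+\cup\Gamma_-)\cap\overline{\Omega}_{\mu/\kappa_2}.$$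
   Context: Points of $\mathbb{R}^n$ are written $x=(x',x_n)$ with $x'\in\mathbb{R}^{n-1}$. For $0<r\le 1$, $\Omega_r:=\{(x',x_n): |x'|<r,\ -\frac{\varepsilon}{2}+h_2(x')<x_n<\frac{\varepsilon}{2}+h_1(x')\}$. $\Gamma_+=\{x_n=\frac{\varepsilon}{2}+h_1(x'),\ |x'|<1\}$ and $\Gamma_-=\{x_n=-\frac{\varepsilon}{2}+h_2(x'),\ |x'|<1\}$. $\nu$ is the unit normal on $\Gamma_+$ pointing upwards (i.e. $\nu=(-D_{x'}h_1,1)/\sqrt{1+|D_{x'}h_1|^2}$) and on $\Gamma_-$ pointing downwards. *)

theory Defs
  imports "HOL-Analysis.Analysis"
begin

text \<open>Points of R^n are pairs (x', x_n) with x' :: real^'m (so n = CARD('m) + 1 >= 2).\<close>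

definition grad :: "('a::euclidean_space \<Rightarrow> real) \<Rightarrow> 'a \<Rightarrow> 'a" where
  "grad f x = (THE g. (f has_derivative (\<lambda>h. g \<bullet> h)) (at x))"

definition divergence :: "('a::euclidean_space \<Rightarrow> 'a) \<Rightarrow> 'a \<Rightarrow> real" where
  "divergence F x = (\<Sum>b\<in>Basis. frechet_derivative F (at x) b \<bullet> b)"

definition p_flux :: "real \<Rightarrow> ('a::euclidean_space \<Rightarrow> real) \<Rightarrow> 'a \<Rightarrow> 'a" where
  "p_flux p v = (\<lambda>x. norm (grad v x) powr (p - 2) *\<^sub>R grad v x)"

definition Omega :: "(real^'m \<Rightarrow> real) \<Rightarrow> (real^'m \<Rightarrow> real) \<Rightarrow> real \<Rightarrow> real \<Rightarrow> ((real^'m) \<times> real) set" where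
  "Omega h1 h2 \<epsilon> r = {(x', t). norm x' < r \<and> - \<epsilon>/2 + h2 x' < t \<and> t < \<epsilon>/2 + h1 x'}"

definition Gamma_plus :: "(real^'m \<Rightarrow> real) \<Rightarrow> real \<Rightarrow> ((real^'m) \<times> real) set" where
  "Gamma_plus h1 \<epsilon> = {(x', t). norm x' < 1 \<and> t = \<epsilon>/2 + h1 x'}"

definition Gamma_minus :: "(real^'m \<Rightarrow> real) \<Rightarrow> real \<Rightarrow> ((real^'m) \<times> real) set" where
  "Gamma_minus h2 \<epsilon> = {(x', t). norm x' < 1 \<and> t = - \<epsilon>/2 + h2 x'}"

definition nu_plus :: "(real^'m \<Rightarrow> real^'m) \<Rightarrow> real^'m \<Rightarrow> (real^'m) \<times> real" where
  "nu_plus Dh1 x' = (1 / sqrt (1 + (norm (Dh1 x'))\<^sup>2)) *\<^sub>R (- Dh1 x', 1)"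

definition nu_minus :: "(real^'m \<Rightarrow> real^'m) \<Rightarrow> real^'m \<Rightarrow> (real^'m) \<times> real" where
  "nu_minus Dh2 x' = (1 / sqrt (1 + (norm (Dh2 x'))\<^sup>2)) *\<^sub>R (Dh2 x', - 1)"

definition C2_ball :: "(real^'m \<Rightarrow> real) \<Rightarrow> (real^'m \<Rightarrow> real^'m) \<Rightarrow> (real^'m \<Rightarrow> real^'m^'m) \<Rightarrow> bool" where
  "C2_ball h Dh H \<longleftrightarrow>
     (\<forall>x\<in>ball 0 1. (h has_derivative (\<lambda>y. Dh x \<bullet> y)) (at x)
                 \<and> (Dh has_derivative (\<lambda>y. H x *v y)) (at x))
     \<and> continuous_on (ball 0 1) H"

end

theory Submission
  imports Defs
begin


lemma taylor_upper:
  fixes g g1 g2 :: "real \<Rightarrow> real"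
  assumes d: "\<And>s. 0 \<le> s \<Longrightarrow> s \<le> 1 \<Longrightarrow> (g has_real_derivative g1 s) (at s) \<and> (g1 has_real_derivative g2 s) (at s)"
    and U: "\<And>s. 0 \<le> s \<Longrightarrow> s \<le> 1 \<Longrightarrow> g2 s \<le> U"
    and "g 0 = 0" "g1 0 = 0"
  shows "g 1 \<le> U / 2"
proof -
  have psi: "U * s - g1 s \<ge> 0" if "0 \<le> s" "s \<le> 1" for s
  proof -
    have "U * 0 - g1 0 \<le> U * s - g1 s"
      apply (rule DERIV_nonneg_imp_nondecreasing[of 0 s "\<lambda>s. U * s - g1 s"])
      using that apply simp
      subgoal for x
        apply (rule exI[of _ "U - g2 x"])
        using d[of x] U[of x] that by (auto intro!: derivative_eq_intros)
      done
    then show ?thesis using assms by simp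
  qed
  have "U * 0^2/2 - g 0 \<le> U * 1^2/2 - g 1"
    apply (rule DERIV_nonneg_imp_nondecreasing[of 0 1 "\<lambda>s. U * s^2/2 - g s"])
      apply simp
    subgoal for x
      apply (rule exI[of _ "U * x - g1 x"])
      using d[of x] psi[of x] by (auto intro!: derivative_eq_intros)
    done
  then show ?thesis using assms by simp
qed

lemma taylor_bdry:
  fixes g g1 g2 :: "real \<Rightarrow> real"
  assumes d: "\<And>s. 0 \<le> s \<Longrightarrow> s \<le> 1 \<Longrightarrow> (g has_real_derivative g1 s) (at s) \<and> (g1 has_real_derivative g2 s) (at s)"
    and L: "\<And>s. 0 \<le> s \<Longrightarrow> s \<le> 1 \<Longrightarrow> q0 - e \<le> g2 s \<and> g2 s \<le> q0 + e"
    and "g 0 = 0" "g1 0 = 0" and a: "1 \<le> a" and k: "a * e \<le> (a - 2) * q0"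
  shows "a * g 1 - g1 1 \<ge> 0"
proof -
  have psi: "g1 s - s * (q0 - e) \<ge> 0" if "0 \<le> s" "s \<le> 1" for s
  proof -
    have "g1 0 - 0 * (q0 - e) \<le> g1 s - s * (q0 - e)"
      apply (rule DERIV_nonneg_imp_nondecreasing[of 0 s "\<lambda>s. g1 s - s * (q0 - e)"])
      using that apply simp
      subgoal for x
        apply (rule exI[of _ "g2 x - (q0 - e)"])
        using d[of x] L[of x] that by (auto intro!: derivative_eq_intros)
      done
    then show ?thesis using assms by simp
  qed
  define k where "k = ((a - 2) * q0 - a * e) / 2"
  have "a * g 0 - 0 * g1 0 - k * 0^2 \<le> a * g 1 - 1 * g1 1 - k * 1^2"
    apply (rule DERIV_nonneg_imp_nondecreasing[of 0 1 "\<lambda>s. a * g s - s * g1 s - k * s^2"])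
      apply simp
    subgoal for x
      apply (rule exI[of _ "a * g1 x - (g1 x + x * g2 x) - k * (2 * x)"])
      apply (intro conjI)
      using d[of x] apply (auto intro!: derivative_eq_intros)[1]
    proof -
      assume x: "0 \<le> x" "x \<le> 1"
      have h1: "(a - 1) * g1 x \<ge> (a - 1) * (x * (q0 - e))"
        using psi[OF x] a by (intro mult_left_mono) auto
      have h2: "x * g2 x \<le> x * (q0 + e)" using L[OF x] x by (intro mult_left_mono) auto
      have "a * g1 x - (g1 x + x * g2 x) - k * (2 * x) = (a - 1) * g1 x - x * g2 x - k * (2 * x)"
        by (simp add: algebra_simps)
      also have "\<dots> \<ge> (a - 1) * (x * (q0 - e)) - x * (q0 + e) - k * (2 * x)"
        using h1 h2 by linarith
      also have "(a - 1) * (x * (q0 - e)) - x * (q0 + e) - k * (2 * x) = 0"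
        unfolding k_def by (simp add: field_simps)
      finally show "0 \<le> a * g1 x - (g1 x + x * g2 x) - k * (2 * x)" by simp
    qed
    done
  then have "a * g 1 - g1 1 \<ge> k" using assms by simp
  moreover have "k \<ge> 0" unfolding k_def using k by simp
  ultimately show ?thesis by simp
qed



lemma grad_eqI:
  assumes "(f has_derivative (\<lambda>h. g \<bullet> h)) (at x)"
  shows "grad f x = g"
  unfolding grad_def
proof (rule the_equality)
  show "(f has_derivative (\<lambda>h. g \<bullet> h)) (at x)" by fact
  fix g' assume "(f has_derivative (\<lambda>h. g' \<bullet> h)) (at x)"
  from has_derivative_unique[OF assms this] have "(\<lambda>h. g \<bullet> h) = (\<lambda>h. g' \<bullet> h)" .
  then have "g \<bullet> (g - g') = g' \<bullet> (g - g')" by metis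
  then have "(g - g') \<bullet> (g - g') = 0" by (simp add: inner_diff_left)
  then show "g' = g" by simp
qed

definition Qf :: "real \<Rightarrow> 'a::euclidean_space \<times> real \<Rightarrow> real" where
  "Qf a z = fst z \<bullet> fst z + a * (snd z)\<^sup>2"
definition Wf :: "real \<Rightarrow> 'a::euclidean_space \<times> real \<Rightarrow> real" where
  "Wf a z = fst z \<bullet> fst z + a\<^sup>2 * (snd z)\<^sup>2"
definition Yf :: "real \<Rightarrow> 'a::euclidean_space \<times> real \<Rightarrow> 'a \<times> real" where
  "Yf a z = (fst z, a * snd z)"
definition Zf :: "real \<Rightarrow> 'a::euclidean_space \<times> real \<Rightarrow> 'a \<times> real" where
  "Zf a z = (fst z, a\<^sup>2 * snd z)"

lemma dQ: "(Qf a has_derivative (\<lambda>h. 2 * (Yf a z \<bullet> h))) (at z within S)"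
  unfolding Qf_def[abs_def] Yf_def
  apply (rule derivative_eq_intros refl | simp)+
  apply (auto simp: inner_prod_def algebra_simps fun_eq_iff inner_commute)
  done

lemma dW: "(Wf a has_derivative (\<lambda>h. 2 * (Zf a z \<bullet> h))) (at z within S)"
  unfolding Wf_def[abs_def] Zf_def
  apply (rule derivative_eq_intros refl | simp)+
  apply (auto simp: inner_prod_def algebra_simps fun_eq_iff inner_commute)
  done

lemma dY: "(Yf a has_derivative Yf a) (at z within S)"
  unfolding Yf_def[abs_def]
  apply (rule derivative_eq_intros refl | simp)+
  done

lemma dv:
  assumes "Qf a z > 0"
  shows "((\<lambda>z. Qf a z powr r) has_derivative (\<lambda>h. ((2 * r * Qf a z powr (r - 1)) *\<^sub>R Yf a z) \<bullet> h)) (at z)"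
  apply (rule derivative_eq_intros dQ refl | simp add: assms)+
  using assms by (auto simp: fun_eq_iff powr_diff field_simps)

lemma grad_v:
  assumes "Qf a z > 0"
  shows "grad (\<lambda>z. Qf a z powr r) z = (2 * r * Qf a z powr (r - 1)) *\<^sub>R Yf a z"
  by (rule grad_eqI[OF dv[OF assms]])

lemma W_pos: assumes "Qf a z > 0" "a > 0" shows "Wf a z > 0"
proof -
  have "fst z \<noteq> 0 \<or> snd z \<noteq> 0" using assms unfolding Qf_def by auto
  then show ?thesis unfolding Wf_def using assms(2)
    by (auto simp: add_pos_nonneg add_nonneg_pos)
qed

lemma norm_Yf: "norm (Yf a z) = sqrt (Wf a z)"
  unfolding Yf_def Wf_def norm_Pair by (simp add: power_mult_distrib power2_norm_eq_inner)

lemma flux_eq: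
  assumes Q: "Qf a x > 0" and a: "a > 0" and g: "\<gamma> > 0"
  shows "p_flux p (\<lambda>z. Qf a z powr (\<gamma>/2)) x =
    (\<gamma> powr (p - 1) * Qf a x powr ((\<gamma>/2 - 1) * (p - 1)) * Wf a x powr ((p - 2)/2)) *\<^sub>R Yf a x"
proof -
  define e where "e = \<gamma>/2 - 1"
  have gr: "grad (\<lambda>z. Qf a z powr (\<gamma>/2)) x = (\<gamma> * Qf a x powr e) *\<^sub>R Yf a x"
    using grad_v[OF Q, of "\<gamma>/2"] by (simp add: e_def)
  have W: "Wf a x > 0" using W_pos Q a by blast
  have n: "norm ((\<gamma> * Qf a x powr e) *\<^sub>R Yf a x) = \<gamma> * Qf a x powr e * Wf a x powr (1/2)"
    using g W by (simp add: norm_Yf powr_half_sqrt)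
  have "(\<gamma> * Qf a x powr e * Wf a x powr (1/2)) powr (p - 2) * (\<gamma> * Qf a x powr e)
     = (\<gamma> powr (p - 2) * Qf a x powr (e * (p - 2)) * Wf a x powr ((p-2)/2)) * (\<gamma> * Qf a x powr e)"
    using g Q W by (simp add: powr_mult powr_powr)
  also have "\<dots> = (\<gamma> powr (p - 2) * \<gamma> powr 1) * (Qf a x powr (e * (p - 2)) * Qf a x powr e) * Wf a x powr ((p-2)/2)"
    using g by simp
  also have "\<dots> = \<gamma> powr (p - 1) * Qf a x powr (e * (p - 1)) * Wf a x powr ((p-2)/2)"
    unfolding powr_add[symmetric] by (simp add: algebra_simps)
  finally show ?thesis
    unfolding p_flux_def gr n by (simp add: e_def)
qed

lemma sum_Basis_prod_real:
  fixes f :: "('a::euclidean_space \<times> 'b::euclidean_space) \<Rightarrow> real"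
  shows "sum f Basis = sum (\<lambda>i. f (i, 0)) Basis + sum (\<lambda>i. f (0, i)) Basis"
proof -
  have "inj_on (\<lambda>u. (u::'a, 0::'b)) Basis" "inj_on (\<lambda>u. (0::'a, u::'b)) Basis"
    by (auto intro!: inj_onI Pair_inject)
  thus ?thesis
    unfolding Basis_prod_def
    by (subst sum.union_disjoint) (auto simp: Basis_prod_def sum.reindex)
qed

lemma trace_Yf: "(\<Sum>b\<in>(Basis :: ('a::euclidean_space \<times> real) set). Yf a b \<bullet> b) = real DIM('a) + a"
  by (subst sum_Basis_prod_real) (simp add: Yf_def inner_prod_def cong: sum.cong)

lemma YY: "Yf a z \<bullet> Yf a z = Wf a z"
  by (simp add: Yf_def Wf_def inner_prod_def power2_norm_eq_inner power2_eq_square)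

lemma ZY: "Zf a z \<bullet> Yf a z = (norm (fst z))\<^sup>2 + a^3 * (snd z)\<^sup>2"
proof -
  have "Zf a z \<bullet> Yf a z = fst z \<bullet> fst z + (a^2 * snd z) * (a * snd z)"
    by (simp add: Yf_def Zf_def inner_prod_def)
  also have "(a^2 * snd z) * (a * snd z) = a^3 * (snd z)\<^sup>2"
    by (simp add: power2_eq_square power3_eq_cube)
  finally show ?thesis by (simp add: power2_norm_eq_inner)
qed

lemma dG:
  fixes z :: "'a::euclidean_space \<times> real"
  assumes Q: "Qf a z > 0" and W: "Wf a z > 0"
  shows "((\<lambda>x. (c * Qf a x powr \<beta> * Wf a x powr s) *\<^sub>R Yf a x) has_derivative
     (\<lambda>h. (c * Qf a z powr \<beta> * Wf a z powr s) *\<^sub>R Yf a h +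
          (c * Qf a z powr \<beta> * Wf a z powr s * (2*\<beta>*(Yf a z \<bullet> h)/Qf a z + 2* s *(Zf a z \<bullet> h)/Wf a z)) *\<^sub>R Yf a z)) (at z)"
  apply (rule derivative_eq_intros dQ dW dY refl | simp add: Q W)+
  using Q W by (auto simp: fun_eq_iff algebra_simps)

lemma open_Qpos: "open {z :: 'a::euclidean_space \<times> real. Qf a z > 0}"
  unfolding Qf_def by (intro open_Collect_less continuous_intros)

lemma div_eq:
  fixes z :: "'a::euclidean_space \<times> real" and p \<gamma> a :: real
  assumes Q: "Qf a z > 0" and a: "a > 0" and g: "\<gamma> > 0"
  defines "c \<equiv> \<gamma> powr (p - 1)" and "\<beta> \<equiv> (\<gamma>/2 - 1) * (p - 1)" and "s \<equiv> (p - 2)/2"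
  shows "p_flux p (\<lambda>z. Qf a z powr (\<gamma>/2)) differentiable (at z) \<and>
    divergence (p_flux p (\<lambda>z. Qf a z powr (\<gamma>/2))) z =
      c * Qf a z powr \<beta> * Wf a z powr s *
       ((real DIM('a) + a) + 2*\<beta>*Wf a z/Qf a z + 2* s *(Zf a z \<bullet> Yf a z)/Wf a z)"
proof -
  have W: "Wf a z > 0" using W_pos Q a by blast
  define K where "K = c * Qf a z powr \<beta> * Wf a z powr s"
  define D where "D = (\<lambda>h. K *\<^sub>R Yf a h +
          (K * (2*\<beta>*(Yf a z \<bullet> h)/Qf a z + 2* s *(Zf a z \<bullet> h)/Wf a z)) *\<^sub>R Yf a z)"
  have dG': "((\<lambda>x. (c * Qf a x powr \<beta> * Wf a x powr s) *\<^sub>R Yf a x) has_derivative D) (at z)"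
    using dG[OF Q W, of c \<beta> s] unfolding D_def K_def .
  have dF: "(p_flux p (\<lambda>z. Qf a z powr (\<gamma>/2)) has_derivative D) (at z)"
    apply (rule has_derivative_transform_within_open[OF dG' open_Qpos[of a]])
    using Q apply simp
    by (subst flux_eq[OF _ a g]) (simp_all add: c_def \<beta>_def s_def)
  have fd: "frechet_derivative (p_flux p (\<lambda>z. Qf a z powr (\<gamma>/2))) (at z) = D"
    using frechet_derivative_at[OF dF] by simp
  have "divergence (p_flux p (\<lambda>z. Qf a z powr (\<gamma>/2))) z = (\<Sum>b\<in>Basis. D b \<bullet> b)"
    unfolding divergence_def fd ..
  also have "\<dots> = (\<Sum>b\<in>Basis. K * (Yf a b \<bullet> b) + (K * (2*\<beta>/Qf a z)) * ((Yf a z \<bullet> b) * (Yf a z \<bullet> b))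
        + (K * (2* s/Wf a z)) * ((Zf a z \<bullet> b) * (Yf a z \<bullet> b)))"
    unfolding D_def by (intro sum.cong refl) (simp add: inner_add_left algebra_simps inner_commute)
  also have "\<dots> = K * (\<Sum>b\<in>(Basis :: ('a \<times> real) set). Yf a b \<bullet> b) + (K * (2*\<beta>/Qf a z)) * (Yf a z \<bullet> Yf a z)
        + (K * (2* s/Wf a z)) * (Zf a z \<bullet> Yf a z)"
    unfolding euclidean_inner[of "Yf a z" "Yf a z"] euclidean_inner[of "Zf a z" "Yf a z"]
    by (simp only: sum.distrib sum_distrib_left)
  also have "\<dots> = K * ((real DIM('a) + a) + 2*\<beta>*Wf a z/Qf a z + 2* s *(Zf a z \<bullet> Yf a z)/Wf a z)"
    unfolding trace_Yf YY by (simp add: algebra_simps)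
  finally show ?thesis using dF unfolding K_def differentiable_def by blast
qed


lemma mat_norm:
  fixes M :: "real^'n^'n"
  shows "norm (M *v x) \<le> (real CARD('n) * real CARD('n) * norm M) * norm x"
proof -
  have "onorm ((*v) M) \<le> real CARD('n) * real CARD('n) * norm M"
    apply (rule onorm_le_matrix_component)
    subgoal for i j using component_le_norm_cart[where x="M$i" and i=j] Finite_Cartesian_Product.norm_nth_le[where x=M and i=i] by linarith
    done
  then show ?thesis
    using onorm[OF matrix_vector_mul_bounded_linear, of M x]
    by (meson mult_right_mono norm_ge_zero order_trans)
qed

lemma seg_derivs:
  fixes h :: "real^'m \<Rightarrow> real"
  assumes C: "C2_ball h Dh H" and x: "norm x < 1" and s: "0 \<le> s" "s \<le> 1"
  shows "((\<lambda>s. h (s *\<^sub>R x)) has_real_derivative (Dh (s *\<^sub>R x) \<bullet> x)) (at s) \<and>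
         ((\<lambda>s. Dh (s *\<^sub>R x) \<bullet> x) has_real_derivative (x \<bullet> (H (s *\<^sub>R x) *v x))) (at s)"
proof -
  have "norm (s *\<^sub>R x) \<le> norm x" using s by (simp add: mult_left_le_one_le)
  then have inb: "s *\<^sub>R x \<in> ball 0 1" using x by simp
  have d1: "(h has_derivative (\<lambda>y. Dh (s *\<^sub>R x) \<bullet> y)) (at (s *\<^sub>R x))"
   and d2: "(Dh has_derivative (\<lambda>y. H (s *\<^sub>R x) *v y)) (at (s *\<^sub>R x))"
    using C inb unfolding C2_ball_def by auto
  have ds: "((\<lambda>s. s *\<^sub>R x) has_derivative (\<lambda>u. u *\<^sub>R x)) (at s)"
    by (auto intro!: derivative_eq_intros)
  have "((\<lambda>s. h (s *\<^sub>R x)) has_derivative (\<lambda>u. Dh (s *\<^sub>R x) \<bullet> (u *\<^sub>R x))) (at s)"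
    using has_derivative_compose[OF ds d1] by simp
  moreover have "(\<lambda>u. Dh (s *\<^sub>R x) \<bullet> (u *\<^sub>R x)) = (*) (Dh (s *\<^sub>R x) \<bullet> x)"
    by (auto simp: fun_eq_iff)
  ultimately have r1: "((\<lambda>s. h (s *\<^sub>R x)) has_real_derivative (Dh (s *\<^sub>R x) \<bullet> x)) (at s)"
    unfolding has_field_derivative_def by simp
  have "((\<lambda>s. Dh (s *\<^sub>R x)) has_derivative (\<lambda>u. H (s *\<^sub>R x) *v (u *\<^sub>R x))) (at s)"
    using has_derivative_compose[OF ds d2] by simp
  then have "((\<lambda>s. Dh (s *\<^sub>R x) \<bullet> x) has_derivative (\<lambda>u. (H (s *\<^sub>R x) *v (u *\<^sub>R x)) \<bullet> x)) (at s)"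
    by (auto intro!: derivative_eq_intros)
  moreover have "(\<lambda>u. (H (s *\<^sub>R x) *v (u *\<^sub>R x)) \<bullet> x) = (*) (x \<bullet> (H (s *\<^sub>R x) *v x))"
    by (auto simp: fun_eq_iff matrix_vector_mult_scaleR inner_commute)
  ultimately have r2: "((\<lambda>s. Dh (s *\<^sub>R x) \<bullet> x) has_real_derivative (x \<bullet> (H (s *\<^sub>R x) *v x))) (at s)"
    unfolding has_field_derivative_def by simp
  show ?thesis using r1 r2 by simp
qed

lemma E_neg:
  fixes R T m a \<beta> s \<eta> :: real
  defines "K0 \<equiv> m + a + 2*\<beta> + 2* s"
    and "C1 \<equiv> (m+a)*(a+a^2) + 4*\<beta>*a^2 + 2* s *(a+a^3)"
    and "C2 \<equiv> (m+a)*a^3 + 2*\<beta>*a^4 + 2* s *a^4"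
  assumes R: "R > 0" and T: "0 \<le> T" "T \<le> \<eta> * R" and e: "\<eta> \<le> 1" "\<eta> * (\<bar>C1\<bar> + \<bar>C2\<bar>) < - K0"
  shows "(m+a)*(R + a*T)*(R + a^2*T) + 2*\<beta>*(R + a^2*T)^2 + 2* s *(R + a*T)*(R + a^3*T) < 0"
proof -
  have eq: "(m+a)*(R + a*T)*(R + a^2*T) + 2*\<beta>*(R + a^2*T)^2 + 2* s *(R + a*T)*(R + a^3*T)
      = K0 * R^2 + C1 * (R*T) + C2 * T^2"
    unfolding K0_def C1_def C2_def by (simp add: algebra_simps power2_eq_square power3_eq_cube power4_eq_xxxx)
  have "0 \<le> \<eta> * R" using T by linarith
  then have eta0: "\<eta> \<ge> 0" using R by (simp add: zero_le_mult_iff)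
  have "R*T \<le> R*(\<eta>*R)" using T R by (intro mult_left_mono) auto
  then have RT: "R*T \<le> \<eta> * R^2" by (simp add: power2_eq_square algebra_simps)
  have TT: "T^2 \<le> \<eta> * R^2"
  proof -
    have "T^2 \<le> (\<eta>*R)^2" using T by (simp add: power_mono)
    also have "\<dots> = \<eta> * (\<eta> * R^2)" by (simp add: power2_eq_square)
    also have "\<dots> \<le> 1 * (\<eta> * R^2)" using e eta0 by (intro mult_right_mono) auto
    finally show ?thesis by simp
  qed
  have RT0: "0 \<le> R*T" using R T by simp
  have a1: "C1 * (R*T) \<le> \<bar>C1\<bar> * (R*T)" using RT0 by (intro mult_right_mono) auto
  have a2: "\<bar>C1\<bar> * (R*T) \<le> \<bar>C1\<bar> * (\<eta> * R^2)" using RT by (intro mult_left_mono) auto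
  have b1: "C2 * T^2 \<le> \<bar>C2\<bar> * T^2" by (intro mult_right_mono) auto
  have b2: "\<bar>C2\<bar> * T^2 \<le> \<bar>C2\<bar> * (\<eta> * R^2)" using TT by (intro mult_left_mono) auto
  have c: "(\<eta> * (\<bar>C1\<bar> + \<bar>C2\<bar>)) * R^2 < (- K0) * R^2" using e R by (intro mult_strict_right_mono) auto
  have d: "(\<eta> * (\<bar>C1\<bar> + \<bar>C2\<bar>)) * R^2 = \<bar>C1\<bar> * (\<eta> * R^2) + \<bar>C2\<bar> * (\<eta> * R^2)"
    by (simp add: algebra_simps)
  have "K0 * R^2 + C1 * (R*T) + C2 * T^2 < 0" using a1 a2 b1 b2 c d by linarith
  then show ?thesis unfolding eq .
qed



lemma mv_neg: "(- A) *v (x::real^'n) = - (A *v x)"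
  by (simp add: matrix_vector_mult_def vec_eq_iff sum_negf)

lemma C2_ball_neg:
  assumes "C2_ball h Dh H"
  shows "C2_ball (\<lambda>x. - h x) (\<lambda>x. - Dh x) (\<lambda>x. - H x)"
  unfolding C2_ball_def
proof (intro conjI ballI)
  fix x :: "real^'a" assume x: "x \<in> ball 0 1"
  have "(h has_derivative (\<lambda>y. Dh x \<bullet> y)) (at x)" "(Dh has_derivative (\<lambda>y. H x *v y)) (at x)"
    using assms x unfolding C2_ball_def by auto
  from has_derivative_minus[OF this(1)] has_derivative_minus[OF this(2)]
  show "((\<lambda>x. - h x) has_derivative (\<lambda>y. (- Dh x) \<bullet> y)) (at x)"
    and "((\<lambda>x. - Dh x) has_derivative (\<lambda>y. (- H x) *v y)) (at x)"
    by (simp_all add: mv_neg)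
next
  show "continuous_on (ball 0 1) (\<lambda>x. - H x)"
    using assms unfolding C2_ball_def by (auto intro: continuous_on_minus)
qed

lemma upper_key:
  fixes h :: "real^'m \<Rightarrow> real"
  assumes C: "C2_ball h Dh H" and h0: "h 0 = 0" "Dh 0 = 0" and x: "norm x < 1"
    and U: "\<And>y. y \<in> ball 0 1 \<Longrightarrow> x \<bullet> (H y *v x) \<le> U"
  shows "h x \<le> U / 2"
proof -
  have "(\<lambda>s. h (s *\<^sub>R x)) 1 \<le> U / 2"
  proof (rule taylor_upper[of _ "\<lambda>s. Dh (s *\<^sub>R x) \<bullet> x" "\<lambda>s. x \<bullet> (H (s *\<^sub>R x) *v x)"])
    fix s :: real assume s: "0 \<le> s" "s \<le> 1"
    show "((\<lambda>s. h (s *\<^sub>R x)) has_real_derivative Dh (s *\<^sub>R x) \<bullet> x) (at s) \<and>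
          ((\<lambda>s. Dh (s *\<^sub>R x) \<bullet> x) has_real_derivative x \<bullet> (H (s *\<^sub>R x) *v x)) (at s)"
      by (rule seg_derivs[OF C x s])
    have "norm (s *\<^sub>R x) \<le> norm x" using s by (simp add: mult_left_le_one_le)
    then show "x \<bullet> (H (s *\<^sub>R x) *v x) \<le> U" using U x by simp
  qed (use h0 in simp_all)
  then show ?thesis by simp
qed

lemma bdry_key:
  fixes h :: "real^'m \<Rightarrow> real" and \<omega> :: "real \<Rightarrow> real"
  assumes C: "C2_ball h Dh H" and h0: "h 0 = 0" "Dh 0 = 0" and x: "norm x < 1" "norm x < b"
    and L: "\<And>y. y \<in> ball 0 1 \<Longrightarrow> \<kappa>1 * (norm x)\<^sup>2 \<le> x \<bullet> (H y *v x)"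
    and om: "\<And>y. y \<in> ball 0 1 \<Longrightarrow> norm (H y - H 0) \<le> \<omega> (norm y)"
    and omb: "\<forall>r>0. r < b \<longrightarrow> \<omega> r < \<delta> * \<kappa>1 / ((2 + \<delta>) * (real CARD('m) * real CARD('m)))"
    and d: "0 < \<delta>" and k: "0 < \<kappa>1"
  shows "(2 + \<delta>) * h x - Dh x \<bullet> x \<ge> 0"
proof -
  define Cm where "Cm = real CARD('m) * real CARD('m)"
  define c where "c = \<delta> * \<kappa>1 / ((2 + \<delta>) * Cm)"
  have c1: "1 \<le> real CARD('m)" using one_le_card_finite[where 'a='m] by simp
  have Cm: "Cm \<ge> 1" unfolding Cm_def using mult_mono[OF c1 c1] by simp
  have c0: "c > 0" unfolding c_def using d k Cm by simp
  define q0 where "q0 = x \<bullet> (H 0 *v x)"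
  define e where "e = Cm * c * (norm x)\<^sup>2"
  have "(2 + \<delta>) * (\<lambda>s. h (s *\<^sub>R x)) 1 - (\<lambda>s. Dh (s *\<^sub>R x) \<bullet> x) 1 \<ge> 0"
  proof (rule taylor_bdry[of _ _ "\<lambda>s. x \<bullet> (H (s *\<^sub>R x) *v x)" q0 e])
    fix s :: real assume s: "0 \<le> s" "s \<le> 1"
    show "((\<lambda>s. h (s *\<^sub>R x)) has_real_derivative Dh (s *\<^sub>R x) \<bullet> x) (at s) \<and>
          ((\<lambda>s. Dh (s *\<^sub>R x) \<bullet> x) has_real_derivative x \<bullet> (H (s *\<^sub>R x) *v x)) (at s)"
      by (rule seg_derivs[OF C x(1) s])
    have ns: "norm (s *\<^sub>R x) \<le> norm x" using s by (simp add: mult_left_le_one_le)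
    have nc: "norm (H (s *\<^sub>R x) - H 0) \<le> c"
    proof (cases "s *\<^sub>R x = 0")
      case True then show ?thesis using c0 by (metis diff_self norm_zero less_imp_le)
    next
      case False
      have o1: "norm (H (s *\<^sub>R x) - H 0) \<le> \<omega> (norm (s *\<^sub>R x))" by (intro om) (unfold mem_ball_0, use ns x in linarith)
      have np: "0 < norm (s *\<^sub>R x)" using False by simp
      have nb: "norm (s *\<^sub>R x) < b" using ns x(2) by linarith
      have "\<omega> (norm (s *\<^sub>R x)) < c" using omb np nb unfolding c_def Cm_def by blast
      then show ?thesis using o1 by simp
    qed
    have "\<bar>x \<bullet> (H (s *\<^sub>R x) *v x) - q0\<bar> = \<bar>x \<bullet> ((H (s *\<^sub>R x) - H 0) *v x)\<bar>"
      unfolding q0_def by (simp add: matrix_vector_mult_diff_rdistrib inner_diff_right)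
    also have "\<dots> \<le> norm x * norm ((H (s *\<^sub>R x) - H 0) *v x)" by (rule Cauchy_Schwarz_ineq2)
    also have "\<dots> \<le> norm x * ((Cm * norm (H (s *\<^sub>R x) - H 0)) * norm x)"
      using mat_norm[of "H (s *\<^sub>R x) - H 0" x] unfolding Cm_def by (intro mult_left_mono) auto
    also have "\<dots> \<le> norm x * ((Cm * c) * norm x)"
      using nc Cm by (intro mult_left_mono mult_right_mono) auto
    also have "\<dots> = e" unfolding e_def by (simp add: power2_eq_square)
    finally show "q0 - e \<le> x \<bullet> (H (s *\<^sub>R x) *v x) \<and> x \<bullet> (H (s *\<^sub>R x) *v x) \<le> q0 + e" by linarith
  next
    have "(2 + \<delta>) * e = \<delta> * (\<kappa>1 * (norm x)\<^sup>2)" unfolding e_def c_def using Cm d by simp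
    also have "\<dots> \<le> \<delta> * q0" unfolding q0_def using L[of 0] d by simp
    finally show "(2 + \<delta>) * e \<le> (2 + \<delta> - 2) * q0" by simp
  qed (use h0 d in simp_all)
  then show ?thesis by simp
qed



lemma closure_Omega: "closure (Omega h1 h2 \<epsilon> r) \<subseteq> {z. norm (fst z) \<le> r}"
proof (rule closure_minimal)
  show "Omega h1 h2 \<epsilon> r \<subseteq> {z. norm (fst z) \<le> r}" by (auto simp: Omega_def)
  show "closed {z :: (real^'a) \<times> real. norm (fst z) \<le> r}"
    by (intro closed_Collect_le continuous_intros)
qed

lemma interior_part:
  fixes h1 h2 :: "real^'m \<Rightarrow> real" and z :: "(real^'m) \<times> real"
    and \<delta> \<gamma> p \<kappa>2 \<mu> \<epsilon> :: real
  defines "a \<equiv> 2 + \<delta>" and "m \<equiv> real CARD('m)"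
    and "\<beta> \<equiv> (\<gamma>/2 - 1) * (p - 1)" and "s \<equiv> (p - 2)/2"
  defines "K0 \<equiv> m + a + 2*\<beta> + 2* s"
    and "C1 \<equiv> (m+a)*(a+a^2) + 4*\<beta>*a^2 + 2* s *(a+a^3)"
    and "C2 \<equiv> (m+a)*a^3 + 2*\<beta>*a^4 + 2* s *a^4"
  assumes d: "0 < \<delta>" and g: "0 < \<gamma>" and k2: "0 < \<kappa>2"
    and K0: "K0 < 0"
    and mu: "0 < \<mu>" "\<mu> \<le> 1" "\<mu> / \<kappa>2 < 1" "\<mu>\<^sup>2 * (\<bar>C1\<bar> + \<bar>C2\<bar>) < - K0"
    and C1: "C2_ball h1 Dh1 H1" and C2: "C2_ball h2 Dh2 H2"
    and h0: "h1 0 = 0" "h2 0 = 0" "Dh1 0 = 0" "Dh2 0 = 0"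
    and hess: "\<forall>x'\<in>ball 0 1. \<forall>\<xi>.
          \<xi> \<bullet> (H1 x' *v \<xi>) \<le> \<kappa>2 * (norm \<xi>)\<^sup>2 \<and> - (\<xi> \<bullet> (H2 x' *v \<xi>)) \<le> \<kappa>2 * (norm \<xi>)\<^sup>2"
    and e: "0 < \<epsilon>"
    and zin: "z \<in> Omega h1 h2 \<epsilon> (\<mu> / \<kappa>2) - Omega h1 h2 \<epsilon> (\<epsilon> / \<mu>)"
  shows "p_flux p (\<lambda>z. Qf a z powr (\<gamma>/2)) differentiable (at z) \<and>
     - divergence (p_flux p (\<lambda>z. Qf a z powr (\<gamma>/2))) z > 0"
proof -
  obtain x t where z: "z = (x, t)" by fastforce
  from zin have x1: "norm x < \<mu>/\<kappa>2" and t1: "-\<epsilon>/2 + h2 x < t" "t < \<epsilon>/2 + h1 x"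
     and x2: "\<not> norm x < \<epsilon>/\<mu>" by (auto simp: Omega_def z)
  have ex: "\<epsilon> \<le> \<mu> * norm x" using x2 mu by (simp add: field_simps)
  have xpos: "norm x > 0" using ex e mu by (metis mult_le_0_iff not_le norm_ge_zero order.strict_trans1 less_le_not_le)
  have xb: "norm x < 1" using x1 mu by simp
  have up1: "h1 x \<le> \<kappa>2 * (norm x)\<^sup>2 / 2"
    by (rule upper_key[OF C1 h0(1) h0(3) xb]) (use hess in auto)
  have up2: "- h2 x \<le> \<kappa>2 * (norm x)\<^sup>2 / 2"
    by (rule upper_key[OF C2_ball_neg[OF C2], of x]) (use h0 xb hess in \<open>auto simp: mv_neg\<close>)
  have kx: "\<kappa>2 * (norm x)\<^sup>2 < \<mu> * norm x"
  proof -
    have "\<kappa>2 * norm x < \<mu>" using x1 k2 by (simp add: field_simps)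
    then show ?thesis using xpos by (simp add: power2_eq_square mult.assoc[symmetric])
  qed
  have tb: "\<bar>t\<bar> < \<mu> * norm x" using t1 up1 up2 kx ex by linarith
  have T: "t\<^sup>2 \<le> \<mu>\<^sup>2 * (norm x)\<^sup>2"
  proof -
    have "t\<^sup>2 = \<bar>t\<bar>\<^sup>2" by simp
    also have "\<dots> \<le> (\<mu> * norm x)\<^sup>2" using tb by (intro power_mono) auto
    finally show ?thesis by (simp add: power_mult_distrib)
  qed
  have a0: "a > 0" unfolding a_def using d by simp
  have Q: "Qf a z > 0" unfolding Qf_def z using xpos a0 by (simp add: add_pos_nonneg)
  have W: "Wf a z > 0" using W_pos[OF Q a0] .
  note D = div_eq[OF Q a0 g, of p]
  define R where "R = (norm x)\<^sup>2"
  define TT where "TT = t\<^sup>2"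
  have R0: "R > 0" unfolding R_def using xpos by simp
  have QR: "Qf a z = R + a * TT" unfolding Qf_def R_def TT_def z by (simp add: power2_norm_eq_inner)
  have WR: "Wf a z = R + a^2 * TT" unfolding Wf_def R_def TT_def z by (simp add: power2_norm_eq_inner)
  have ZYR: "Zf a z \<bullet> Yf a z = R + a^3 * TT" unfolding ZY R_def TT_def z by simp
  have mu2: "\<mu>\<^sup>2 \<le> 1" using mu by (simp add: power_le_one)
  have E: "(m+a)*(R + a*TT)*(R + a^2*TT) + 2*\<beta>*(R + a^2*TT)^2 + 2* s *(R + a*TT)*(R + a^3*TT) < 0"
    unfolding K0_def C1_def C2_def
    apply (rule E_neg[where \<eta> = "\<mu>\<^sup>2"])
    using R0 T mu2 mu(4) unfolding R_def TT_def K0_def C1_def C2_def by (auto simp: mult.commute)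
  have br: "(real DIM(real^'m) + a) + 2*\<beta>*Wf a z/Qf a z + 2* s *(Zf a z \<bullet> Yf a z)/Wf a z
     = ((m+a)*(R + a*TT)*(R + a^2*TT) + 2*\<beta>*(R + a^2*TT)^2 + 2* s *(R + a*TT)*(R + a^3*TT)) / (Qf a z * Wf a z)"
    using Q W unfolding QR WR ZYR m_def by (simp add: field_simps power2_eq_square)
  have brneg: "(real DIM(real^'m) + a) + 2*\<beta>*Wf a z/Qf a z + 2* s *(Zf a z \<bullet> Yf a z)/Wf a z < 0"
    unfolding br using E Q W by (simp add: divide_neg_pos)
  have pos: "\<gamma> powr (p - 1) * Qf a z powr \<beta> * Wf a z powr s > 0" using g Q W by simp
  show ?thesis using D brneg pos unfolding \<beta>_def s_def
    by (simp add: mult_pos_neg)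
qed



lemma bdry_plus:
  fixes h1 h2 :: "real^'m \<Rightarrow> real" and z :: "(real^'m) \<times> real"
    and \<delta> \<gamma> \<kappa>1 \<kappa>2 \<mu> \<epsilon> b :: real and \<omega> :: "real \<Rightarrow> real"
  assumes d: "0 < \<delta>" and g: "0 < \<gamma>" and k1: "0 < \<kappa>1"
    and mu: "\<mu> / \<kappa>2 < b" "\<mu> / \<kappa>2 < 1"
    and omb: "\<forall>r>0. r < b \<longrightarrow> \<omega> r < \<delta> * \<kappa>1 / ((2 + \<delta>) * (real CARD('m) * real CARD('m)))"
    and C1: "C2_ball h1 Dh1 H1" and h0: "h1 0 = 0" "Dh1 0 = 0"
    and L: "\<forall>x'\<in>ball 0 1. \<forall>\<xi>. \<kappa>1 * (norm \<xi>)\<^sup>2 \<le> \<xi> \<bullet> (H1 x' *v \<xi>)"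
    and om: "\<forall>x'\<in>ball 0 1. norm (H1 x' - H1 0) \<le> \<omega> (norm x')"
    and e: "0 < \<epsilon>"
    and zin: "z \<in> Gamma_plus h1 \<epsilon> \<inter> closure (Omega h1 h2 \<epsilon> (\<mu> / \<kappa>2))"
  shows "(\<lambda>z. Qf (2 + \<delta>) z powr (\<gamma>/2)) differentiable (at z) \<and>
     grad (\<lambda>z. Qf (2 + \<delta>) z powr (\<gamma>/2)) z \<bullet> nu_plus Dh1 (fst z) > 0"
proof -
  define a where "a = 2 + \<delta>"
  obtain x t where z: "z = (x, t)" by fastforce
  from zin have x1: "norm x < 1" and t: "t = \<epsilon>/2 + h1 x"
    by (auto simp: Gamma_plus_def z)
  have "z \<in> closure (Omega h1 h2 \<epsilon> (\<mu> / \<kappa>2))" using zin by simp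
  then have "z \<in> {z. norm (fst z) \<le> \<mu> / \<kappa>2}" using closure_Omega by blast
  then have "norm x \<le> \<mu>/\<kappa>2" by (simp add: z)
  then have xb: "norm x < b" using mu by simp
  have key: "(2 + \<delta>) * h1 x - Dh1 x \<bullet> x \<ge> 0"
    by (rule bdry_key[OF C1 h0 x1 xb _ _ omb d k1]) (use L om in auto)
  have a0: "a > 0" unfolding a_def using d by simp
  have Q: "Qf a z > 0"
  proof (cases "x = 0")
    case True
    then have "t = \<epsilon>/2" using t h0 by simp
    then show ?thesis unfolding Qf_def z using a0 e True by simp
  next
    case False
    then show ?thesis unfolding Qf_def z using a0 by (simp add: add_pos_nonneg)
  qed
  have gr: "grad (\<lambda>z. Qf a z powr (\<gamma>/2)) z = (\<gamma> * Qf a z powr (\<gamma>/2 - 1)) *\<^sub>R Yf a z"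
    using grad_v[OF Q, of "\<gamma>/2"] by simp
  define c2 where "c2 = 1 / sqrt (1 + (norm (Dh1 x))\<^sup>2)"
  have c2: "c2 > 0" unfolding c2_def by (simp add: add_pos_nonneg)
  have "grad (\<lambda>z. Qf a z powr (\<gamma>/2)) z \<bullet> nu_plus Dh1 (fst z)
      = (\<gamma> * Qf a z powr (\<gamma>/2 - 1)) * c2 * (- (x \<bullet> Dh1 x) + a * t)"
    unfolding gr nu_plus_def by (simp add: z Yf_def inner_prod_def c2_def algebra_simps diff_divide_distrib)
  moreover have "- (x \<bullet> Dh1 x) + a * t > 0"
  proof -
    have "- (x \<bullet> Dh1 x) + a * t = a * (\<epsilon>/2) + ((2 + \<delta>) * h1 x - Dh1 x \<bullet> x)"
      unfolding t a_def by (simp add: algebra_simps inner_commute)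
    moreover have "a * (\<epsilon>/2) > 0" using a0 e by simp
    ultimately show ?thesis using key by linarith
  qed
  moreover have "(\<gamma> * Qf a z powr (\<gamma>/2 - 1)) * c2 > 0" using g Q c2 by simp
  ultimately have pos: "grad (\<lambda>z. Qf a z powr (\<gamma>/2)) z \<bullet> nu_plus Dh1 (fst z) > 0" by simp
  have "(\<lambda>z. Qf a z powr (\<gamma>/2)) differentiable (at z)"
    using dv[OF Q] unfolding differentiable_def by blast
  then show ?thesis using pos unfolding a_def by simp
qed

lemma bdry_minus:
  fixes h1 h2 :: "real^'m \<Rightarrow> real" and z :: "(real^'m) \<times> real"
    and \<delta> \<gamma> \<kappa>1 \<kappa>2 \<mu> \<epsilon> b :: real and \<omega> :: "real \<Rightarrow> real"
  assumes d: "0 < \<delta>" and g: "0 < \<gamma>" and k1: "0 < \<kappa>1"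
    and mu: "\<mu> / \<kappa>2 < b" "\<mu> / \<kappa>2 < 1"
    and omb: "\<forall>r>0. r < b \<longrightarrow> \<omega> r < \<delta> * \<kappa>1 / ((2 + \<delta>) * (real CARD('m) * real CARD('m)))"
    and C2: "C2_ball h2 Dh2 H2" and h0: "h2 0 = 0" "Dh2 0 = 0"
    and L: "\<forall>x'\<in>ball 0 1. \<forall>\<xi>. \<kappa>1 * (norm \<xi>)\<^sup>2 \<le> - (\<xi> \<bullet> (H2 x' *v \<xi>))"
    and om: "\<forall>x'\<in>ball 0 1. norm (H2 x' - H2 0) \<le> \<omega> (norm x')"
    and e: "0 < \<epsilon>"
    and zin: "z \<in> Gamma_minus h2 \<epsilon> \<inter> closure (Omega h1 h2 \<epsilon> (\<mu> / \<kappa>2))"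
  shows "(\<lambda>z. Qf (2 + \<delta>) z powr (\<gamma>/2)) differentiable (at z) \<and>
     grad (\<lambda>z. Qf (2 + \<delta>) z powr (\<gamma>/2)) z \<bullet> nu_minus Dh2 (fst z) > 0"
proof -
  define a where "a = 2 + \<delta>"
  obtain x t where z: "z = (x, t)" by fastforce
  from zin have x1: "norm x < 1" and t: "t = - \<epsilon>/2 + h2 x"
    by (auto simp: Gamma_minus_def z)
  have "z \<in> closure (Omega h1 h2 \<epsilon> (\<mu> / \<kappa>2))" using zin by simp
  then have "z \<in> {z. norm (fst z) \<le> \<mu> / \<kappa>2}" using closure_Omega by blast
  then have "norm x \<le> \<mu>/\<kappa>2" by (simp add: z)
  then have xb: "norm x < b" using mu by simp
  have h0': "(\<lambda>x. - h2 x) 0 = 0" "(\<lambda>x. - Dh2 x) 0 = 0" using h0 by auto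
  have key: "(2 + \<delta>) * (- h2 x) - (- Dh2 x) \<bullet> x \<ge> 0"
    using bdry_key[OF C2_ball_neg[OF C2] h0' x1 xb _ _ omb d k1] L om
    by (simp add: mv_neg norm_minus_commute)
  have a0: "a > 0" unfolding a_def using d by simp
  have Q: "Qf a z > 0"
  proof (cases "x = 0")
    case True
    then have "t = - \<epsilon>/2" using t h0 by simp
    then show ?thesis unfolding Qf_def z using a0 e True by simp
  next
    case False
    then show ?thesis unfolding Qf_def z using a0 by (simp add: add_pos_nonneg)
  qed
  have gr: "grad (\<lambda>z. Qf a z powr (\<gamma>/2)) z = (\<gamma> * Qf a z powr (\<gamma>/2 - 1)) *\<^sub>R Yf a z"
    using grad_v[OF Q, of "\<gamma>/2"] by simp
  define c2 where "c2 = 1 / sqrt (1 + (norm (Dh2 x))\<^sup>2)"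
  have c2: "c2 > 0" unfolding c2_def by (simp add: add_pos_nonneg)
  have "grad (\<lambda>z. Qf a z powr (\<gamma>/2)) z \<bullet> nu_minus Dh2 (fst z)
      = (\<gamma> * Qf a z powr (\<gamma>/2 - 1)) * c2 * (x \<bullet> Dh2 x - a * t)"
    unfolding gr nu_minus_def by (simp add: z Yf_def inner_prod_def c2_def algebra_simps diff_divide_distrib)
  moreover have "x \<bullet> Dh2 x - a * t > 0"
  proof -
    have "x \<bullet> Dh2 x - a * t = a * (\<epsilon>/2) + ((2 + \<delta>) * (- h2 x) - (- Dh2 x) \<bullet> x)"
      unfolding t a_def by (simp add: algebra_simps inner_commute)
    moreover have "a * (\<epsilon>/2) > 0" using a0 e by simp
    ultimately show ?thesis using key by linarith
  qed
  moreover have "(\<gamma> * Qf a z powr (\<gamma>/2 - 1)) * c2 > 0" using g Q c2 by simp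
  ultimately have pos: "grad (\<lambda>z. Qf a z powr (\<gamma>/2)) z \<bullet> nu_minus Dh2 (fst z) > 0" by simp
  have "(\<lambda>z. Qf a z powr (\<gamma>/2)) differentiable (at z)"
    using dv[OF Q] unfolding differentiable_def by blast
  then show ?thesis using pos unfolding a_def by simp
qed



theorem lemma4p1:
  fixes p \<delta> \<gamma> \<kappa>1 \<kappa>2 :: real and \<omega> :: "real \<Rightarrow> real"
  assumes "p > real CARD('m) + 2"
    and "0 < \<delta>" "\<delta> < p - real CARD('m) - 2"
    and "0 < \<gamma>" "\<gamma> < (p - real CARD('m) - 2 - \<delta>) / (p - 1)"
    and "0 < \<kappa>1" "0 < \<kappa>2"
    and "(\<omega> \<longlongrightarrow> 0) (at_right 0)"
  shows "\<exists>\<mu>. 0 < \<mu> \<and> \<mu> < 1/2 \<and>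
    (\<forall>(h1 :: real^'m \<Rightarrow> real) h2 Dh1 Dh2 H1 H2.
      C2_ball h1 Dh1 H1 \<and> C2_ball h2 Dh2 H2 \<and>
      h1 0 = 0 \<and> h2 0 = 0 \<and> Dh1 0 = 0 \<and> Dh2 0 = 0 \<and>
      (\<forall>x'\<in>ball 0 1. \<forall>\<xi>.
          \<kappa>1 * (norm \<xi>)\<^sup>2 \<le> \<xi> \<bullet> (H1 x' *v \<xi>) \<and> \<xi> \<bullet> (H1 x' *v \<xi>) \<le> \<kappa>2 * (norm \<xi>)\<^sup>2 \<and>
          \<kappa>1 * (norm \<xi>)\<^sup>2 \<le> - (\<xi> \<bullet> (H2 x' *v \<xi>)) \<and> - (\<xi> \<bullet> (H2 x' *v \<xi>)) \<le> \<kappa>2 * (norm \<xi>)\<^sup>2) \<and>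
      (\<forall>x'\<in>ball 0 1. norm (H1 x' - H1 0) \<le> \<omega> (norm x') \<and> norm (H2 x' - H2 0) \<le> \<omega> (norm x'))
      \<longrightarrow>
      (\<forall>\<epsilon>. 0 < \<epsilon> \<and> \<epsilon> < \<mu>\<^sup>2 / \<kappa>2 \<longrightarrow>
        (let v = (\<lambda>z :: (real^'m) \<times> real. ((norm (fst z))\<^sup>2 + (2 + \<delta>) * (snd z)\<^sup>2) powr (\<gamma> / 2)) in
          (\<forall>z \<in> Omega h1 h2 \<epsilon> (\<mu> / \<kappa>2) - Omega h1 h2 \<epsilon> (\<epsilon> / \<mu>).
              p_flux p v differentiable (at z) \<and> - divergence (p_flux p v) z > 0) \<and>
          (\<forall>z \<in> Gamma_plus h1 \<epsilon> \<inter> closure (Omega h1 h2 \<epsilon> (\<mu> / \<kappa>2)).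
              v differentiable (at z) \<and> grad v z \<bullet> nu_plus Dh1 (fst z) > 0) \<and>
          (\<forall>z \<in> Gamma_minus h2 \<epsilon> \<inter> closure (Omega h1 h2 \<epsilon> (\<mu> / \<kappa>2)).
              v differentiable (at z) \<and> grad v z \<bullet> nu_minus Dh2 (fst z) > 0))))"
proof -
  define a where "a = 2 + \<delta>"
  define m where "m = real CARD('m)"
  define \<beta> where "\<beta> = (\<gamma>/2 - 1) * (p - 1)"
  define s where "s = (p - 2)/2"
  define K0 where "K0 = m + a + 2*\<beta> + 2 * s"
  define C1 where "C1 = (m+a)*(a+a^2) + 4*\<beta>*a^2 + 2 * s*(a+a^3)"
  define C2 where "C2 = (m+a)*a^3 + 2*\<beta>*a^4 + 2 * s*a^4"
  define M where "M = \<bar>C1\<bar> + \<bar>C2\<bar> + 1"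
  define c where "c = \<delta> * \<kappa>1 / ((2 + \<delta>) * (real CARD('m) * real CARD('m)))"
  have d: "0 < \<delta>" and g: "0 < \<gamma>" and k1: "0 < \<kappa>1" and k2: "0 < \<kappa>2" using assms by auto
  have p1: "p - 1 > 0" using assms(1) by simp
  have "\<gamma> * (p - 1) < p - real CARD('m) - 2 - \<delta>"
    using assms(5) p1 by (simp add: pos_less_divide_eq)
  moreover have "K0 = m + \<delta> + \<gamma> * (p - 1) - p + 2"
    unfolding K0_def m_def a_def \<beta>_def s_def by (simp add: field_simps)
  ultimately have K0: "K0 < 0" unfolding m_def by linarith
  have cardpos: "real CARD('m) > 0" by simp
  have c0: "c > 0" unfolding c_def using d k1 cardpos by simp
  have "\<forall>\<^sub>F r in at_right 0. \<omega> r < c" using order_tendstoD(2)[OF assms(8) c0] .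
  then obtain b where b0: "b > 0" and bb: "\<forall>r>0. r < b \<longrightarrow> \<omega> r < c"
    unfolding eventually_at_right[OF zero_less_one] by auto
  have M0: "M > 0" unfolding M_def by simp
  define \<mu> where "\<mu> = min (1/4) (min (\<kappa>2 * min b 1 / 2) (- K0 / (2 * M)))"
  have mu0: "\<mu> > 0" unfolding \<mu>_def using k2 b0 K0 M0 by (simp add: divide_neg_pos)
  have mu1: "\<mu> \<le> 1/4" unfolding \<mu>_def by simp
  have mu2: "\<mu> \<le> \<kappa>2 * min b 1 / 2" unfolding \<mu>_def by simp
  have mu3: "\<mu> \<le> - K0 / (2 * M)" unfolding \<mu>_def by simp
  have "\<mu> / \<kappa>2 \<le> (\<kappa>2 * min b 1 / 2) / \<kappa>2" using mu2 k2 by (intro divide_right_mono) auto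
  then have mk: "\<mu> / \<kappa>2 \<le> min b 1 / 2" using k2 by simp
  have mb: "\<mu> / \<kappa>2 < b" using mk b0 by linarith
  have m1: "\<mu> / \<kappa>2 < 1" using mk by linarith
  have "\<mu> * M \<le> (- K0 / (2 * M)) * M" using mu3 M0 by (intro mult_right_mono) auto
  then have muM: "\<mu> * M \<le> - K0 / 2" using M0 by simp
  have "\<mu>\<^sup>2 * M \<le> (1/4) * (\<mu> * M)"
  proof -
    have "\<mu>\<^sup>2 * M = \<mu> * (\<mu> * M)" by (simp add: power2_eq_square)
    also have "\<dots> \<le> (1/4) * (\<mu> * M)" using mu1 mu0 M0 by (intro mult_right_mono) auto
    finally show ?thesis .
  qed
  moreover have "\<mu>\<^sup>2 * (\<bar>C1\<bar> + \<bar>C2\<bar>) \<le> \<mu>\<^sup>2 * M" unfolding M_def by (intro mult_left_mono) auto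
  ultimately have mu4: "\<mu>\<^sup>2 * (\<bar>C1\<bar> + \<bar>C2\<bar>) < - K0" using muM K0 by linarith
  have veq: "(\<lambda>z :: (real^'m) \<times> real. ((norm (fst z))\<^sup>2 + (2 + \<delta>) * (snd z)\<^sup>2) powr (\<gamma> / 2))
      = (\<lambda>z. Qf (2 + \<delta>) z powr (\<gamma> / 2))"
    by (simp add: Qf_def power2_norm_eq_inner fun_eq_iff)
  show ?thesis
    apply (rule exI[of _ \<mu>])
    apply (intro conjI allI impI)
      apply (rule mu0)
     apply (use mu1 in simp)
    subgoal premises P for h1 h2 Dh1 Dh2 H1 H2 \<epsilon>
    proof -
      have C1: "C2_ball h1 Dh1 H1" and C2: "C2_ball h2 Dh2 H2" and h0: "h1 0 = 0" "h2 0 = 0" "Dh1 0 = 0" "Dh2 0 = 0"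
        using P by auto
      have hess: "\<forall>x'\<in>ball 0 1. \<forall>\<xi>.
          \<kappa>1 * (norm \<xi>)\<^sup>2 \<le> \<xi> \<bullet> (H1 x' *v \<xi>) \<and> \<xi> \<bullet> (H1 x' *v \<xi>) \<le> \<kappa>2 * (norm \<xi>)\<^sup>2 \<and>
          \<kappa>1 * (norm \<xi>)\<^sup>2 \<le> - (\<xi> \<bullet> (H2 x' *v \<xi>)) \<and> - (\<xi> \<bullet> (H2 x' *v \<xi>)) \<le> \<kappa>2 * (norm \<xi>)\<^sup>2"
        using P by blast
      have om: "\<forall>x'\<in>ball 0 1. norm (H1 x' - H1 0) \<le> \<omega> (norm x') \<and> norm (H2 x' - H2 0) \<le> \<omega> (norm x')"
        using P by blast
      have e: "0 < \<epsilon>" using P by blast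
      have hU: "\<forall>x'\<in>ball 0 1. \<forall>\<xi>.
          \<xi> \<bullet> (H1 x' *v \<xi>) \<le> \<kappa>2 * (norm \<xi>)\<^sup>2 \<and> - (\<xi> \<bullet> (H2 x' *v \<xi>)) \<le> \<kappa>2 * (norm \<xi>)\<^sup>2"
        using hess by blast
      have hL1: "\<forall>x'\<in>ball 0 1. \<forall>\<xi>. \<kappa>1 * (norm \<xi>)\<^sup>2 \<le> \<xi> \<bullet> (H1 x' *v \<xi>)" using hess by blast
      have hL2: "\<forall>x'\<in>ball 0 1. \<forall>\<xi>. \<kappa>1 * (norm \<xi>)\<^sup>2 \<le> - (\<xi> \<bullet> (H2 x' *v \<xi>))" using hess by blast
      have om1: "\<forall>x'\<in>ball 0 1. norm (H1 x' - H1 0) \<le> \<omega> (norm x')" using om by blast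
      have om2: "\<forall>x'\<in>ball 0 1. norm (H2 x' - H2 0) \<le> \<omega> (norm x')" using om by blast
      have bb': "\<forall>r>0. r < b \<longrightarrow> \<omega> r < \<delta> * \<kappa>1 / ((2 + \<delta>) * (real CARD('m) * real CARD('m)))"
        using bb unfolding c_def .
      have K0': "real CARD('m) + (2 + \<delta>) + 2 * ((\<gamma> / 2 - 1) * (p - 1)) + 2 * ((p - 2) / 2) < 0"
        using K0 unfolding K0_def m_def a_def \<beta>_def s_def .
      have mu4': "\<mu>\<^sup>2 * (\<bar>(real CARD('m) + (2 + \<delta>)) * ((2 + \<delta>) + (2 + \<delta>)^2) + 4 * ((\<gamma> / 2 - 1) * (p - 1)) * (2 + \<delta>)^2 + 2 * ((p - 2) / 2) * ((2 + \<delta>) + (2 + \<delta>)^3)\<bar>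
          + \<bar>(real CARD('m) + (2 + \<delta>)) * (2 + \<delta>)^3 + 2 * ((\<gamma> / 2 - 1) * (p - 1)) * (2 + \<delta>)^4 + 2 * ((p - 2) / 2) * (2 + \<delta>)^4\<bar>)
          < - (real CARD('m) + (2 + \<delta>) + 2 * ((\<gamma> / 2 - 1) * (p - 1)) + 2 * ((p - 2) / 2))"
        using mu4 unfolding K0_def C1_def C2_def m_def a_def \<beta>_def s_def .
      have mule: "\<mu> \<le> 1" using mu1 by simp
      show ?thesis
        unfolding Let_def veq
        using interior_part[OF d g k2 K0' mu0 mule m1 mu4' C1 C2 h0 hU e]
          bdry_plus[OF d g k1 mb m1 bb' C1 h0(1) h0(3) hL1 om1 e]
          bdry_minus[OF d g k1 mb m1 bb' C2 h0(2) h0(4) hL2 om2 e]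
        by blast
    qed
    done
qed


end
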